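(* Let $S=\mathbb{C}[x_{ij}: 1\le i\le 4,\ 1\le j\le 3]$ with the $\mathbb{Z}^3$ column grading, and let $\Delta\in S$ be homogeneous of column degree $(1,1,1)$. Suppose $\Delta=ab+cd$ where $a,c$ are linear forms and $b,d$ are quadratic forms (homogeneous in the standard grading). Then there exist $a',b',c',d'\in S$, each homogeneous in the column grading, with $a',c'$ linear and $b',d'$ quadratic in the standard grading, such that $\Delta=a'b'+c'd'$.
   Context: The column grading is the $\mathbb{Z}^3$-grading with $\deg x_{i1}=(1,0,0)$, $\deg x_{i2}=(0,1,0)$, $\deg x_{i3}=(0,0,1)$ for $1\le i\le 4$ (the variables are the entries of a generic $4\times 3$ matrix, graded by column). *)

theory Defs
  imports Complex_Main "HOL-Library.Poly_Mapping"
begin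

text \<open>Polynomials in the variables x_(i,j): a monomial is a finitely supported
  exponent map (nat * nat) =>0 nat, a polynomial is a finitely supported
  coefficient map from monomials to complex numbers (ring structure from Poly_Mapping).\<close>

type_synonym mono = "(nat \<times> nat) \<Rightarrow>\<^sub>0 nat"
type_synonym mpoly = "mono \<Rightarrow>\<^sub>0 complex"

definition in_S :: "mpoly \<Rightarrow> bool" where
  "in_S p \<longleftrightarrow> (\<forall>m\<in>Poly_Mapping.keys p. Poly_Mapping.keys m \<subseteq> {1..4} \<times> {1..3})"

definition tdeg :: "mono \<Rightarrow> nat" where
  "tdeg m = (\<Sum>v\<in>Poly_Mapping.keys m. Poly_Mapping.lookup m v)"

definition coldeg :: "mono \<Rightarrow> nat \<Rightarrow> nat" where
  "coldeg m j = (\<Sum>i\<in>{1..4}. Poly_Mapping.lookup m (i, j))"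

definition coldeg3 :: "mono \<Rightarrow> nat \<times> nat \<times> nat" where
  "coldeg3 m = (coldeg m 1, coldeg m 2, coldeg m 3)"

definition std_homog :: "nat \<Rightarrow> mpoly \<Rightarrow> bool" where
  "std_homog d p \<longleftrightarrow> (\<forall>m\<in>Poly_Mapping.keys p. tdeg m = d)"

definition col_homog_deg :: "nat \<times> nat \<times> nat \<Rightarrow> mpoly \<Rightarrow> bool" where
  "col_homog_deg \<delta> p \<longleftrightarrow> (\<forall>m\<in>Poly_Mapping.keys p. coldeg3 m = \<delta>)"

definition col_homog :: "mpoly \<Rightarrow> bool" where
  "col_homog p \<longleftrightarrow> (\<exists>\<delta>. col_homog_deg \<delta> p)"

end

theory Submission
  imports Defs
begin


definition mono_ev :: "mono \<Rightarrow> (nat\<times>nat \<Rightarrow> complex) \<Rightarrow> complex" where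
  "mono_ev m x = (\<Prod>v\<in>Poly_Mapping.keys m. x v ^ Poly_Mapping.lookup m v)"
definition ev :: "mpoly \<Rightarrow> (nat\<times>nat \<Rightarrow> complex) \<Rightarrow> complex" where
  "ev p x = (\<Sum>m\<in>Poly_Mapping.keys p. Poly_Mapping.lookup p m * mono_ev m x)"

lemma mono_ev_superset: "finite K \<Longrightarrow> Poly_Mapping.keys m \<subseteq> K \<Longrightarrow>
   mono_ev m x = (\<Prod>v\<in>K. x v ^ Poly_Mapping.lookup m v)"
  unfolding mono_ev_def by (rule prod.mono_neutral_left) (auto simp: in_keys_iff)

lemma mono_ev_add: "mono_ev (m + n) x = mono_ev m x * mono_ev n x"
proof -
  let ?K = "Poly_Mapping.keys m \<union> Poly_Mapping.keys n"
  have "mono_ev (m+n) x = (\<Prod>v\<in>?K. x v ^ Poly_Mapping.lookup (m+n) v)"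
    by (rule mono_ev_superset) (auto dest: subsetD[OF keys_add])
  also have "\<dots> = (\<Prod>v\<in>?K. x v ^ Poly_Mapping.lookup m v) * (\<Prod>v\<in>?K. x v ^ Poly_Mapping.lookup n v)"
    by (simp add: lookup_add power_add prod.distrib)
  also have "\<dots> = mono_ev m x * mono_ev n x"
    by (simp add: mono_ev_superset[of ?K])
  finally show ?thesis .
qed

lemma mono_ev_single: "mono_ev (Poly_Mapping.single v k) x = x v ^ k"
  by (simp add: mono_ev_def)

lemma ev_superset: "finite K \<Longrightarrow> Poly_Mapping.keys p \<subseteq> K \<Longrightarrow>
   ev p x = (\<Sum>m\<in>K. Poly_Mapping.lookup p m * mono_ev m x)"
  unfolding ev_def by (rule sum.mono_neutral_left) (auto simp: in_keys_iff)

lemma ev_add: "ev (p + q) x = ev p x + ev q x"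
proof -
  let ?K = "Poly_Mapping.keys p \<union> Poly_Mapping.keys q"
  have "ev (p+q) x = (\<Sum>m\<in>?K. Poly_Mapping.lookup (p+q) m * mono_ev m x)"
    by (rule ev_superset) (auto dest: subsetD[OF keys_add])
  also have "\<dots> = ev p x + ev q x"
    by (simp add: lookup_add distrib_right sum.distrib ev_superset[of ?K])
  finally show ?thesis .
qed

lemma ev_zero[simp]: "ev 0 x = 0" by (simp add: ev_def)

lemma ev_single: "ev (Poly_Mapping.single m c) x = c * mono_ev m x"
  by (simp add: ev_def)

lemma ev_sum: "ev (\<Sum>i\<in>A. f i) x = (\<Sum>i\<in>A. ev (f i) x)"
  by (induction A rule: infinite_finite_induct) (auto simp: ev_add)

lemma rep_gen:
  assumes "finite K" "inj_on f K" "\<And>m. m \<in> Poly_Mapping.keys p \<Longrightarrow> m \<in> f ` K"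
  shows "p = (\<Sum>k\<in>K. Poly_Mapping.single (f k) (Poly_Mapping.lookup p (f k)))"
proof (rule poly_mapping_eqI)
  fix m
  have L: "Poly_Mapping.lookup (\<Sum>k\<in>K. Poly_Mapping.single (f k) (Poly_Mapping.lookup p (f k))) m
     = (\<Sum>k\<in>K. if f k = m then Poly_Mapping.lookup p m else 0)"
    by (auto simp: lookup_sum lookup_single when_def intro!: sum.cong)
  show "Poly_Mapping.lookup p m = Poly_Mapping.lookup (\<Sum>k\<in>K. Poly_Mapping.single (f k) (Poly_Mapping.lookup p (f k))) m"
  proof (cases "m \<in> f ` K")
    case True
    then obtain k0 where k0: "k0 \<in> K" "m = f k0" by auto
    have "(\<Sum>k\<in>K. if f k = m then Poly_Mapping.lookup p m else 0) = (\<Sum>k\<in>K. if k = k0 then Poly_Mapping.lookup p m else 0)"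
      apply (rule sum.cong[OF refl]) using assms(2) k0 by (auto simp: inj_on_def)
    also have "\<dots> = Poly_Mapping.lookup p m" using k0 assms(1) by simp
    finally show ?thesis using L by simp
  next
    case False
    hence "Poly_Mapping.lookup p m = 0" using assms(3) by (auto simp: in_keys_iff)
    have "(\<Sum>k\<in>K. if f k = m then Poly_Mapping.lookup p m else 0) = 0"
      by (rule sum.neutral) (use False in auto)
    thus ?thesis using L \<open>Poly_Mapping.lookup p m = 0\<close> by simp
  qed
qed

lemma poly_rep: "p = (\<Sum>m\<in>Poly_Mapping.keys p. Poly_Mapping.single m (Poly_Mapping.lookup p m))"
  using rep_gen[of "Poly_Mapping.keys p" id p] by simp

lemma ev_mult: "ev (p * q) x = ev p x * ev q x"
proof -
  have "p * q = (\<Sum>m\<in>Poly_Mapping.keys p. Poly_Mapping.single m (Poly_Mapping.lookup p m)) *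
     (\<Sum>n\<in>Poly_Mapping.keys q. Poly_Mapping.single n (Poly_Mapping.lookup q n))"
    using poly_rep[of p] poly_rep[of q] by simp
  also have "\<dots> = (\<Sum>m\<in>Poly_Mapping.keys p. \<Sum>n\<in>Poly_Mapping.keys q.
      Poly_Mapping.single (m + n) (Poly_Mapping.lookup p m * Poly_Mapping.lookup q n))"
    apply (simp add: sum_distrib_left sum_distrib_right mult_single)
    by (rule sum.swap)
  finally have "ev (p*q) x = (\<Sum>m\<in>Poly_Mapping.keys p. \<Sum>n\<in>Poly_Mapping.keys q.
      Poly_Mapping.lookup p m * Poly_Mapping.lookup q n * (mono_ev m x * mono_ev n x))"
    by (simp add: ev_sum ev_single mono_ev_add)
  also have "\<dots> = ev p x * ev q x"
    by (simp add: ev_def sum_product mult_ac)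
  finally show ?thesis .
qed



definition ee :: "nat \<times> nat \<Rightarrow> mono" where "ee v = Poly_Mapping.single v (1::nat)"

definition mono3 :: "nat \<Rightarrow> nat \<Rightarrow> nat \<Rightarrow> mono" where
  "mono3 a b c = ee (a,1) + ee (b,2) + ee (c,3)"

definition tri :: "nat \<Rightarrow> nat \<Rightarrow> nat \<Rightarrow> (nat \<Rightarrow> nat \<Rightarrow> nat \<Rightarrow> complex) \<Rightarrow> mpoly" where
  "tri p q r U = (\<Sum>a\<in>{1..4}. \<Sum>b\<in>{1..4}. \<Sum>c\<in>{1..4}.
      Poly_Mapping.single (ee (a,p) + ee (b,q) + ee (c,r)) (U a b c))"

definition lin :: "nat \<Rightarrow> (nat \<Rightarrow> complex) \<Rightarrow> mpoly" where
  "lin p A = (\<Sum>a\<in>{1..4}. Poly_Mapping.single (ee (a,p)) (A a))"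

definition bil :: "nat \<Rightarrow> nat \<Rightarrow> (nat \<Rightarrow> nat \<Rightarrow> complex) \<Rightarrow> mpoly" where
  "bil q r B = (\<Sum>b\<in>{1..4}. \<Sum>c\<in>{1..4}. Poly_Mapping.single (ee (b,q) + ee (c,r)) (B b c))"

definition Fcol :: "(nat \<Rightarrow> nat \<Rightarrow> nat \<Rightarrow> complex) \<Rightarrow> (nat\<times>nat \<Rightarrow> complex) \<Rightarrow> complex" where
  "Fcol T x = (\<Sum>a\<in>{1..4}. \<Sum>b\<in>{1..4}. \<Sum>c\<in>{1..4}. T a b c * x (a,1) * x (b,2) * x (c,3))"

definition Lc :: "(nat\<times>nat \<Rightarrow> complex) \<Rightarrow> nat \<Rightarrow> (nat\<times>nat \<Rightarrow> complex) \<Rightarrow> complex" where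
  "Lc \<alpha> j x = (\<Sum>i\<in>{1..4}. \<alpha> (i,j) * x (i,j))"

definition LL :: "(nat\<times>nat \<Rightarrow> complex) \<Rightarrow> (nat\<times>nat \<Rightarrow> complex) \<Rightarrow> complex" where
  "LL \<alpha> x = Lc \<alpha> 1 x + Lc \<alpha> 2 x + Lc \<alpha> 3 x"

lemma lookup_ee: "Poly_Mapping.lookup (ee v) w = (if v = w then 1 else 0)"
  by (simp add: ee_def lookup_single when_def)

lemma keys_ee[simp]: "Poly_Mapping.keys (ee v) = {v}"
  by (simp add: ee_def)

lemma mono_ev_ee[simp]: "mono_ev (ee v) x = x v"
  by (simp add: ee_def mono_ev_single)

lemma col_one:
  fixes m :: mono
  assumes "(\<Sum>i\<in>{1..4::nat}. Poly_Mapping.lookup m (i,j)) = 1"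
  shows "\<exists>a\<in>{1..4}. Poly_Mapping.lookup m (a,j) = 1 \<and> (\<forall>i\<in>{1..4}. a \<noteq> i \<longrightarrow> Poly_Mapping.lookup m (i,j) = 0)"
  using iffD1[OF sum_eq_1_iff[OF finite_atLeastAtMost, where f="\<lambda>i. Poly_Mapping.lookup m (i,j)"] assms] .

lemma lookup_mono3: "Poly_Mapping.lookup (mono3 a b c) (i,j) = (if j=1 \<and> i=a then 1 else 0)
   + (if j=2 \<and> i=b then 1 else 0) + (if j=3 \<and> i=c then 1 else 0)"
  by (simp add: mono3_def lookup_add lookup_ee)

lemma keys_Delta:
  assumes "in_S D" "col_homog_deg (1,1,1) D" "m \<in> Poly_Mapping.keys D"
  shows "\<exists>a\<in>{1..4}. \<exists>b\<in>{1..4}. \<exists>c\<in>{1..4}. m = mono3 a b c"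
proof -
  have box: "Poly_Mapping.keys m \<subseteq> {1..4} \<times> {1..3}" using assms(1,3) by (auto simp: in_S_def)
  have cd: "coldeg m 1 = 1" "coldeg m 2 = 1" "coldeg m 3 = 1"
    using assms(2,3) by (auto simp: col_homog_deg_def coldeg3_def)
  obtain a where a: "a\<in>{1..4}" "Poly_Mapping.lookup m (a,1) = 1" "\<forall>i\<in>{1..4}. a \<noteq> i \<longrightarrow> Poly_Mapping.lookup m (i,1) = 0"
    using col_one[of m 1] cd(1) unfolding coldeg_def by blast
  obtain b where b: "b\<in>{1..4}" "Poly_Mapping.lookup m (b,2) = 1" "\<forall>i\<in>{1..4}. b \<noteq> i \<longrightarrow> Poly_Mapping.lookup m (i,2) = 0"
    using col_one[of m 2] cd(2) unfolding coldeg_def by blast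
  obtain c where c: "c\<in>{1..4}" "Poly_Mapping.lookup m (c,3) = 1" "\<forall>i\<in>{1..4}. c \<noteq> i \<longrightarrow> Poly_Mapping.lookup m (i,3) = 0"
    using col_one[of m 3] cd(3) unfolding coldeg_def by blast
  have "m = mono3 a b c"
  proof (rule poly_mapping_eqI)
    fix v :: "nat \<times> nat"
    obtain i j where v: "v = (i,j)" by (cases v)
    show "Poly_Mapping.lookup m v = Poly_Mapping.lookup (mono3 a b c) v"
    proof (cases "v \<in> {1..4} \<times> {1..3}")
      case True
      hence "j = 1 \<or> j = 2 \<or> j = 3" "i \<in> {1..4}" using v by auto
      hence "Poly_Mapping.lookup m (i,j) = (if j=1 \<and> i=a then 1 else 0) + (if j=2 \<and> i=b then 1 else 0) + (if j=3 \<and> i=c then 1 else 0)"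
        using a(2,3) b(2,3) c(2,3) by (elim disjE; cases "i=a"; cases "i=b"; cases "i=c") simp_all
      thus ?thesis using v by (simp add: lookup_mono3)
    next
      case False
      hence "Poly_Mapping.lookup m v = 0" using box by (auto simp: in_keys_iff)
      moreover have "Poly_Mapping.lookup (mono3 a b c) v = 0"
        using False a(1) b(1) c(1) v by (auto simp: lookup_mono3)
      ultimately show ?thesis by simp
    qed
  qed
  thus ?thesis using a(1) b(1) c(1) by blast
qed

lemma mono3_inj: "mono3 a b c = mono3 a' b' c' \<Longrightarrow> a = a' \<and> b = b' \<and> c = c'"
proof -
  assume h: "mono3 a b c = mono3 a' b' c'"
  have 1: "(if a = a' then 1 else 0) = (1::nat)"
    using arg_cong[OF h, of "\<lambda>m. Poly_Mapping.lookup m (a,1)"] by (simp add: lookup_mono3)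
  have 2: "(if b = b' then 1 else 0) = (1::nat)"
    using arg_cong[OF h, of "\<lambda>m. Poly_Mapping.lookup m (b,2)"] by (simp add: lookup_mono3)
  have 3: "(if c = c' then 1 else 0) = (1::nat)"
    using arg_cong[OF h, of "\<lambda>m. Poly_Mapping.lookup m (c,3)"] by (simp add: lookup_mono3)
  from 1 2 3 show ?thesis by (metis zero_neq_one)
qed

lemma sum3: "(\<Sum>k\<in>A\<times>B\<times>C. f k) = (\<Sum>a\<in>A. \<Sum>b\<in>B. \<Sum>c\<in>C. f (a,b,c))"
  by (simp add: sum.cartesian_product split_def)

lemma three_eq: "{1..3::nat} = {1,2,3}" by auto

lemma Delta_rep:
  assumes "in_S D" "col_homog_deg (1,1,1) D"
  shows "D = tri 1 2 3 (\<lambda>a b c. Poly_Mapping.lookup D (mono3 a b c))"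
proof -
  let ?K = "{1..4::nat} \<times> {1..4::nat} \<times> {1..4::nat}"
  let ?f = "\<lambda>(a,b,c). mono3 a b c"
  have "D = (\<Sum>k\<in>?K. Poly_Mapping.single (?f k) (Poly_Mapping.lookup D (?f k)))"
  proof (rule rep_gen)
    show "inj_on ?f ?K" by (auto simp: inj_on_def dest: mono3_inj)
    fix m assume "m \<in> Poly_Mapping.keys D"
    then obtain a b c where "a\<in>{1..4}" "b\<in>{1..4}" "c\<in>{1..4}" "m = mono3 a b c"
      using keys_Delta[OF assms] by blast
    thus "m \<in> ?f ` ?K" by (force intro: image_eqI[where x="(a,b,c)"])
  qed simp
  also have "\<dots> = tri 1 2 3 (\<lambda>a b c. Poly_Mapping.lookup D (mono3 a b c))"
    unfolding tri_def sum3 by (simp add: mono3_def)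
  finally show ?thesis .
qed

lemma keys_lin_form:
  assumes "in_S f" "std_homog 1 f" "m \<in> Poly_Mapping.keys f"
  shows "\<exists>v\<in>{1..4}\<times>{1..3}. m = ee v"
proof -
  have box: "Poly_Mapping.keys m \<subseteq> {1..4} \<times> {1..3}" using assms(1,3) by (auto simp: in_S_def)
  have "tdeg m = 1" using assms(2,3) by (auto simp: std_homog_def)
  then obtain v where v: "v \<in> Poly_Mapping.keys m" "Poly_Mapping.lookup m v = 1"
     "\<forall>w\<in>Poly_Mapping.keys m. v \<noteq> w \<longrightarrow> Poly_Mapping.lookup m w = 0"
    unfolding tdeg_def sum_eq_1_iff[OF finite_keys] by blast
  have "m = ee v"
  proof (rule poly_mapping_eqI)
    fix w show "Poly_Mapping.lookup m w = Poly_Mapping.lookup (ee v) w"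
      using v by (cases "w \<in> Poly_Mapping.keys m") (auto simp: lookup_ee in_keys_iff)
  qed
  thus ?thesis using v box by auto
qed

lemma lin_rep:
  assumes "in_S f" "std_homog 1 f"
  shows "f = (\<Sum>v\<in>{1..4}\<times>{1..3}. Poly_Mapping.single (ee v) (Poly_Mapping.lookup f (ee v)))"
proof (rule rep_gen)
  show "inj_on ee ({1..4}\<times>{1..3})"
    by (rule inj_onI) (metis ee_def lookup_single_eq lookup_single_not_eq zero_neq_one)
  fix m assume "m \<in> Poly_Mapping.keys f"
  thus "m \<in> ee ` ({1..4}\<times>{1..3})" using keys_lin_form[OF assms] by blast
qed simp

lemma ev_lin:
  assumes "in_S f" "std_homog 1 f"
  shows "ev f x = LL (\<lambda>v. Poly_Mapping.lookup f (ee v)) x"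
proof -
  have "ev f x = (\<Sum>v\<in>{1..4}\<times>{1..3}. Poly_Mapping.lookup f (ee v) * x v)"
    by (subst lin_rep[OF assms]) (simp add: ev_sum ev_single mono_ev_single)
  also have "\<dots> = LL (\<lambda>v. Poly_Mapping.lookup f (ee v)) x"
  proof -
    have "(\<Sum>v\<in>{1..4}\<times>{1..3}. Poly_Mapping.lookup f (ee v) * x v) =
       (\<Sum>i\<in>{1..4}. \<Sum>j\<in>{1..3}. Poly_Mapping.lookup f (ee (i,j)) * x (i,j))"
      by (simp add: sum.cartesian_product split_def)
    also have "\<dots> = (\<Sum>j\<in>{1..3}. \<Sum>i\<in>{1..4}. Poly_Mapping.lookup f (ee (i,j)) * x (i,j))"
      by (rule sum.swap)
    finally show ?thesis unfolding LL_def Lc_def three_eq by simp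
  qed
  finally show ?thesis .
qed

lemma ev_tri123: "ev (tri 1 2 3 T) x = Fcol T x"
  by (simp add: tri_def Fcol_def ev_sum ev_single mono_ev_add mono_ev_single mult_ac)



lemma keys_sum_singles: "Poly_Mapping.keys (\<Sum>a\<in>A. Poly_Mapping.single (m a) (c a)) \<subseteq> m ` A"
  using keys_sum[of "\<lambda>a. Poly_Mapping.single (m a) (c a)" A] by auto

lemma keys_sum_sum_singles: "Poly_Mapping.keys (\<Sum>a\<in>A. \<Sum>b\<in>B. Poly_Mapping.single (m a b) (c a b)) \<subseteq> (\<Union>a\<in>A. \<Union>b\<in>B. {m a b})"
proof -
  have "Poly_Mapping.keys (\<Sum>a\<in>A. \<Sum>b\<in>B. Poly_Mapping.single (m a b) (c a b)) \<subseteq>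
     (\<Union>a\<in>A. Poly_Mapping.keys (\<Sum>b\<in>B. Poly_Mapping.single (m a b) (c a b)))" by (rule keys_sum)
  also have "\<dots> \<subseteq> (\<Union>a\<in>A. \<Union>b\<in>B. {m a b})"
  proof (rule UN_mono[OF order_refl])
    fix a show "Poly_Mapping.keys (\<Sum>b\<in>B. Poly_Mapping.single (m a b) (c a b)) \<subseteq> (\<Union>b\<in>B. {m a b})"
      using keys_sum_singles[of "m a" "c a" B] by auto
  qed
  finally show ?thesis .
qed

lemma tdeg_superset: "finite K \<Longrightarrow> Poly_Mapping.keys m \<subseteq> K \<Longrightarrow> tdeg m = (\<Sum>v\<in>K. Poly_Mapping.lookup m v)"
  unfolding tdeg_def by (rule sum.mono_neutral_left) (auto simp: in_keys_iff)

lemma tdeg_add: "tdeg (m + n) = tdeg m + tdeg n"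
proof -
  let ?K = "Poly_Mapping.keys m \<union> Poly_Mapping.keys n"
  have "tdeg (m+n) = (\<Sum>v\<in>?K. Poly_Mapping.lookup (m+n) v)"
    by (rule tdeg_superset) (auto dest: subsetD[OF keys_add])
  also have "\<dots> = tdeg m + tdeg n"
    by (simp add: lookup_add sum.distrib tdeg_superset[of ?K])
  finally show ?thesis .
qed

lemma tdeg_ee: "tdeg (ee v) = 1" by (simp add: tdeg_def lookup_ee)

lemma coldeg_add: "coldeg (m + n) j = coldeg m j + coldeg n j"
  by (simp add: coldeg_def lookup_add sum.distrib)

lemma coldeg_ee: "a \<in> {1..4} \<Longrightarrow> coldeg (ee (a,p)) j = (if j = p then 1 else 0)"
  by (simp add: coldeg_def lookup_ee)

lemma coldeg3_ee: "a \<in> {1..4} \<Longrightarrow> coldeg3 (ee (a,p)) = coldeg3 (ee (1,p))"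
  by (simp add: coldeg3_def coldeg_ee)

lemma lin_props:
  assumes "p \<in> {1,2,3}"
  shows "in_S (lin p A) \<and> col_homog (lin p A) \<and> std_homog 1 (lin p A)"
proof -
  have K: "Poly_Mapping.keys (lin p A) \<subseteq> (\<lambda>a. ee (a,p)) ` {1..4}"
    unfolding lin_def by (rule keys_sum_singles)
  have M: "\<exists>a\<in>{1..4}. m = ee (a,p)" if "m \<in> Poly_Mapping.keys (lin p A)" for m
    using K that by blast
  have "in_S (lin p A)" unfolding in_S_def
  proof
    fix m assume "m \<in> Poly_Mapping.keys (lin p A)"
    then obtain a where "a \<in> {1..4}" "m = ee (a,p)" using M by blast
    thus "Poly_Mapping.keys m \<subseteq> {1..4} \<times> {1..3}" using assms by auto
  qed
  moreover have "col_homog_deg (coldeg3 (ee (1,p))) (lin p A)"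
    unfolding col_homog_deg_def
  proof
    fix m assume "m \<in> Poly_Mapping.keys (lin p A)"
    then obtain a where a: "a \<in> {1..4}" "m = ee (a,p)" using M by blast
    thus "coldeg3 m = coldeg3 (ee (1,p))" using coldeg3_ee[OF a(1), of p] by simp
  qed
  moreover have "std_homog 1 (lin p A)"
    unfolding std_homog_def
  proof
    fix m assume "m \<in> Poly_Mapping.keys (lin p A)"
    then obtain a where "a \<in> {1..4}" "m = ee (a,p)" using M by blast
    thus "tdeg m = 1" using tdeg_ee by simp
  qed
  ultimately show ?thesis unfolding col_homog_def by blast
qed

lemma bil_props:
  assumes "q \<in> {1,2,3}" "r \<in> {1,2,3}"
  shows "in_S (bil q r B) \<and> col_homog (bil q r B) \<and> std_homog 2 (bil q r B)"
proof -
  have K: "Poly_Mapping.keys (bil q r B) \<subseteq> (\<Union>b\<in>{1..4}. \<Union>c\<in>{1..4}. {ee (b,q) + ee (c,r)})"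
    unfolding bil_def by (rule keys_sum_sum_singles)
  have "in_S (bil q r B)" unfolding in_S_def
  proof
    fix m assume "m \<in> Poly_Mapping.keys (bil q r B)"
    then obtain b c where "b \<in> {1..4}" "c \<in> {1..4}" "m = ee (b,q) + ee (c,r)" using K by blast
    thus "Poly_Mapping.keys m \<subseteq> {1..4} \<times> {1..3}" using assms
      by (auto dest!: subsetD[OF keys_add])
  qed
  moreover have "col_homog_deg (coldeg3 (ee (1,q) + ee (1,r))) (bil q r B)"
    unfolding col_homog_deg_def
  proof
    fix m assume "m \<in> Poly_Mapping.keys (bil q r B)"
    then obtain b c where "b \<in> {1..4}" "c \<in> {1..4}" "m = ee (b,q) + ee (c,r)" using K by blast
    thus "coldeg3 m = coldeg3 (ee (1,q) + ee (1,r))"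
      by (simp add: coldeg3_def coldeg_add coldeg_ee)
  qed
  moreover have "std_homog 2 (bil q r B)"
    unfolding std_homog_def
  proof
    fix m assume "m \<in> Poly_Mapping.keys (bil q r B)"
    then obtain b c where "b \<in> {1..4}" "c \<in> {1..4}" "m = ee (b,q) + ee (c,r)" using K by blast
    thus "tdeg m = 2" by (simp add: tdeg_add tdeg_ee)
  qed
  ultimately show ?thesis unfolding col_homog_def by blast
qed

lemma lin_bil: "lin p A * bil q r B = (\<Sum>a\<in>{1..4}. \<Sum>b\<in>{1..4}. \<Sum>c\<in>{1..4}.
      Poly_Mapping.single (ee (a,p) + ee (b,q) + ee (c,r)) (A a * B b c))"
  unfolding lin_def bil_def sum_distrib_right
  unfolding sum_distrib_left by (simp add: mult_single add.assoc)

lemma lin_bil': "lin q G * bil p r W = (\<Sum>a\<in>{1..4}. \<Sum>b\<in>{1..4}. \<Sum>c\<in>{1..4}.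
      Poly_Mapping.single (ee (a,p) + ee (b,q) + ee (c,r)) (G b * W a c))"
proof -
  have "lin q G * bil p r W = (\<Sum>b\<in>{1..4}. \<Sum>a\<in>{1..4}. \<Sum>c\<in>{1..4}.
      Poly_Mapping.single (ee (b,q) + ee (a,p) + ee (c,r)) (G b * W a c))" by (rule lin_bil)
  also have "\<dots> = (\<Sum>a\<in>{1..4}. \<Sum>b\<in>{1..4}. \<Sum>c\<in>{1..4}.
      Poly_Mapping.single (ee (b,q) + ee (a,p) + ee (c,r)) (G b * W a c))" by (rule sum.swap)
  also have "\<dots> = (\<Sum>a\<in>{1..4}. \<Sum>b\<in>{1..4}. \<Sum>c\<in>{1..4}.
      Poly_Mapping.single (ee (a,p) + ee (b,q) + ee (c,r)) (G b * W a c))" by (simp add: add.commute)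
  finally show ?thesis .
qed

lemma R1:
  assumes "\<And>a b c. a \<in> {1..4} \<Longrightarrow> b \<in> {1..4} \<Longrightarrow> c \<in> {1..4} \<Longrightarrow> U a b c = A a * B b c + M a * B' b c"
  shows "tri p q r U = lin p A * bil q r B + lin p M * bil q r B'"
proof -
  have "tri p q r U = (\<Sum>a\<in>{1..4}. \<Sum>b\<in>{1..4}. \<Sum>c\<in>{1..4}.
      Poly_Mapping.single (ee (a,p) + ee (b,q) + ee (c,r)) (A a * B b c) +
      Poly_Mapping.single (ee (a,p) + ee (b,q) + ee (c,r)) (M a * B' b c))"
    unfolding tri_def by (intro sum.cong refl) (simp add: assms single_add)
  also have "\<dots> = lin p A * bil q r B + lin p M * bil q r B'"
    unfolding lin_bil by (simp only: sum.distrib)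
  finally show ?thesis .
qed

lemma R2:
  assumes "\<And>a b c. a \<in> {1..4} \<Longrightarrow> b \<in> {1..4} \<Longrightarrow> c \<in> {1..4} \<Longrightarrow> U a b c = A a * B b c + G b * W a c"
  shows "tri p q r U = lin p A * bil q r B + lin q G * bil p r W"
proof -
  have "tri p q r U = (\<Sum>a\<in>{1..4}. \<Sum>b\<in>{1..4}. \<Sum>c\<in>{1..4}.
      Poly_Mapping.single (ee (a,p) + ee (b,q) + ee (c,r)) (A a * B b c) +
      Poly_Mapping.single (ee (a,p) + ee (b,q) + ee (c,r)) (G b * W a c))"
    unfolding tri_def by (intro sum.cong refl) (simp add: assms single_add)
  also have "\<dots> = lin p A * bil q r B + lin q G * bil p r W"
    unfolding lin_bil'[of q G p r W] lin_bil[of p A q r B] by (simp only: sum.distrib)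
  finally show ?thesis .
qed

lemma tri_swap12: "tri p q r U = tri q p r (\<lambda>b a c. U a b c)"
proof -
  have "tri q p r (\<lambda>b a c. U a b c) = (\<Sum>b\<in>{1..4}. \<Sum>a\<in>{1..4}. \<Sum>c\<in>{1..4}.
      Poly_Mapping.single (ee (b,q) + ee (a,p) + ee (c,r)) (U a b c))" by (simp add: tri_def)
  also have "\<dots> = (\<Sum>a\<in>{1..4}. \<Sum>b\<in>{1..4}. \<Sum>c\<in>{1..4}.
      Poly_Mapping.single (ee (b,q) + ee (a,p) + ee (c,r)) (U a b c))" by (rule sum.swap)
  also have "\<dots> = tri p q r U" by (simp add: tri_def add.commute)
  finally show ?thesis ..
qed

lemma tri_swap23: "tri p q r U = tri p r q (\<lambda>a c b. U a b c)"
proof -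
  have "tri p r q (\<lambda>a c b. U a b c) = (\<Sum>a\<in>{1..4}. \<Sum>c\<in>{1..4}. \<Sum>b\<in>{1..4}.
      Poly_Mapping.single (ee (a,p) + ee (c,r) + ee (b,q)) (U a b c))" by (simp add: tri_def)
  also have "\<dots> = (\<Sum>a\<in>{1..4}. \<Sum>b\<in>{1..4}. \<Sum>c\<in>{1..4}.
      Poly_Mapping.single (ee (a,p) + ee (c,r) + ee (b,q)) (U a b c))" by (intro sum.cong refl sum.swap)
  also have "\<dots> = tri p q r U" by (simp add: tri_def add.commute add.left_commute)
  finally show ?thesis ..
qed



definition dl :: "nat \<Rightarrow> nat \<Rightarrow> complex" where "dl a x = (if x = a then 1 else 0)"

definition pt3 :: "nat \<Rightarrow> nat \<Rightarrow> nat \<Rightarrow> (nat \<Rightarrow> complex) \<Rightarrow> (nat \<Rightarrow> complex) \<Rightarrow> (nat \<Rightarrow> complex) \<Rightarrow> nat \<times> nat \<Rightarrow> complex" where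
  "pt3 p q r v w z = (\<lambda>(i,j). if j = p then v i else if j = q then w i else z i)"

definition Fgen :: "nat \<Rightarrow> nat \<Rightarrow> nat \<Rightarrow> (nat \<Rightarrow> nat \<Rightarrow> nat \<Rightarrow> complex) \<Rightarrow> (nat\<times>nat \<Rightarrow> complex) \<Rightarrow> complex" where
  "Fgen p q r U x = (\<Sum>a\<in>{1..4}. \<Sum>b\<in>{1..4}. \<Sum>c\<in>{1..4}. U a b c * x (a,p) * x (b,q) * x (c,r))"

lemma Fcol_Fgen: "Fcol T x = Fgen 1 2 3 T x" by (simp add: Fcol_def Fgen_def)

lemma Fgen_swap12: "Fgen p q r U x = Fgen q p r (\<lambda>b a c. U a b c) x"
proof -
  have "Fgen q p r (\<lambda>b a c. U a b c) x = (\<Sum>b\<in>{1..4}. \<Sum>a\<in>{1..4}. \<Sum>c\<in>{1..4}. U a b c * x (b,q) * x (a,p) * x (c,r))"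
    by (simp add: Fgen_def)
  also have "\<dots> = (\<Sum>a\<in>{1..4}. \<Sum>b\<in>{1..4}. \<Sum>c\<in>{1..4}. U a b c * x (b,q) * x (a,p) * x (c,r))"
    by (rule sum.swap)
  also have "\<dots> = Fgen p q r U x" by (simp add: Fgen_def mult_ac)
  finally show ?thesis ..
qed

lemma Fgen_swap23: "Fgen p q r U x = Fgen p r q (\<lambda>a c b. U a b c) x"
proof -
  have "Fgen p r q (\<lambda>a c b. U a b c) x = (\<Sum>a\<in>{1..4}. \<Sum>c\<in>{1..4}. \<Sum>b\<in>{1..4}. U a b c * x (a,p) * x (c,r) * x (b,q))"
    by (simp add: Fgen_def)
  also have "\<dots> = (\<Sum>a\<in>{1..4}. \<Sum>b\<in>{1..4}. \<Sum>c\<in>{1..4}. U a b c * x (a,p) * x (c,r) * x (b,q))"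
    by (intro sum.cong refl sum.swap)
  also have "\<dots> = Fgen p q r U x" by (simp add: Fgen_def mult_ac)
  finally show ?thesis ..
qed

lemma Fgen_pt3: "p \<noteq> q \<Longrightarrow> p \<noteq> r \<Longrightarrow> q \<noteq> r \<Longrightarrow>
   Fgen p q r U (pt3 p q r v w z) = (\<Sum>a\<in>{1..4}. \<Sum>b\<in>{1..4}. \<Sum>c\<in>{1..4}. U a b c * v a * w b * z c)"
  by (simp add: Fgen_def pt3_def)

lemma Lc_pt3_p: "Lc \<alpha> p (pt3 p q r v w z) = (\<Sum>i\<in>{1..4}. \<alpha> (i,p) * v i)"
  by (simp add: Lc_def pt3_def)

lemma Lc_pt3_q: "p \<noteq> q \<Longrightarrow> Lc \<alpha> q (pt3 p q r v w z) = (\<Sum>i\<in>{1..4}. \<alpha> (i,q) * w i)"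
  by (simp add: Lc_def pt3_def)

lemma sdl1: "c \<in> {1..4} \<Longrightarrow> (\<Sum>x\<in>{1..4}. f x * dl c x) = f c"
proof -
  assume c: "c \<in> {1..4}"
  have "(\<Sum>x\<in>{1..4}. f x * dl c x) = (\<Sum>x\<in>{1..4}. if x = c then f x else 0)"
    by (rule sum.cong) (auto simp: dl_def)
  also have "\<dots> = f c" using c by (simp add: sum.delta')
  finally show ?thesis .
qed

lemma sdl2: "b \<in> {1..4} \<Longrightarrow> j0 \<in> {1..4} \<Longrightarrow> (\<Sum>x\<in>{1..4}. f x * (dl b x - g * dl j0 x)) = f b - g * f j0"
proof -
  assume "b \<in> {1..4}" "j0 \<in> {1..4}"
  have "(\<Sum>x\<in>{1..4}. f x * (dl b x - g * dl j0 x)) = (\<Sum>x\<in>{1..4}. f x * dl b x) - g * (\<Sum>x\<in>{1..4}. f x * dl j0 x)"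
    by (simp add: right_diff_distrib sum_subtractf sum_distrib_left mult_ac)
  thus ?thesis using sdl1 \<open>b \<in> {1..4}\<close> \<open>j0 \<in> {1..4}\<close> by simp
qed

lemma sdl3: "a \<in> {1..4} \<Longrightarrow> i0 \<in> {1..4} \<Longrightarrow> i1 \<in> {1..4} \<Longrightarrow>
  (\<Sum>x\<in>{1..4}. f x * (dl a x - k * dl i0 x - m * dl i1 x)) = f a - k * f i0 - m * f i1"
proof -
  assume "a \<in> {1..4}" "i0 \<in> {1..4}" "i1 \<in> {1..4}"
  have "(\<Sum>x\<in>{1..4}. f x * (dl a x - k * dl i0 x - m * dl i1 x)) = (\<Sum>x\<in>{1..4}. f x * dl a x) - k * (\<Sum>x\<in>{1..4}. f x * dl i0 x)
     - m * (\<Sum>x\<in>{1..4}. f x * dl i1 x)"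
    by (simp add: right_diff_distrib sum_subtractf sum_distrib_left mult_ac)
  thus ?thesis using sdl1 \<open>a \<in> {1..4}\<close> \<open>i0 \<in> {1..4}\<close> \<open>i1 \<in> {1..4}\<close> by simp
qed

lemma tri_eval:
  assumes "a \<in> {1..4}" "b \<in> {1..4}" "c \<in> {1..4}" "i0 \<in> {1..4}" "i1 \<in> {1..4}" "j0 \<in> {1..4}"
  shows "(\<Sum>a'\<in>{1..4}. \<Sum>b'\<in>{1..4}. \<Sum>c'\<in>{1..4}. U a' b' c' * (dl a a' - k * dl i0 a' - m * dl i1 a')
           * (dl b b' - g * dl j0 b') * dl c c')
   = (U a b c - g * U a j0 c) - k * (U i0 b c - g * U i0 j0 c) - m * (U i1 b c - g * U i1 j0 c)"
proof -
  let ?v = "\<lambda>a'. dl a a' - k * dl i0 a' - m * dl i1 a'"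
  let ?w = "\<lambda>b'. dl b b' - g * dl j0 b'"
  have "(\<Sum>a'\<in>{1..4}. \<Sum>b'\<in>{1..4}. \<Sum>c'\<in>{1..4}. U a' b' c' * ?v a' * ?w b' * dl c c')
      = (\<Sum>a'\<in>{1..4}. \<Sum>b'\<in>{1..4}. U a' b' c * ?v a' * ?w b')"
    by (intro sum.cong refl sdl1[OF assms(3)])
  also have "\<dots> = (\<Sum>a'\<in>{1..4}. U a' b c * ?v a' - g * (U a' j0 c * ?v a'))"
    by (intro sum.cong refl) (rule sdl2[OF assms(2,6)])
  also have "\<dots> = (\<Sum>a'\<in>{1..4}. U a' b c * ?v a') - g * (\<Sum>a'\<in>{1..4}. U a' j0 c * ?v a')"
    by (simp add: sum_subtractf sum_distrib_left)
  also have "\<dots> = (U a b c - k * U i0 b c - m * U i1 b c) - g * (U a j0 c - k * U i0 j0 c - m * U i1 j0 c)"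
    using sdl3[OF assms(1,4,5)] by simp
  also have "\<dots> = (U a b c - g * U a j0 c) - k * (U i0 b c - g * U i0 j0 c) - m * (U i1 b c - g * U i1 j0 c)"
    by (simp add: algebra_simps)
  finally show ?thesis .
qed



definition GoalT :: "(nat \<Rightarrow> nat \<Rightarrow> nat \<Rightarrow> complex) \<Rightarrow> bool" where
  "GoalT T \<longleftrightarrow> (\<exists>a' b' c' d'. in_S a' \<and> in_S b' \<and> in_S c' \<and> in_S d'
    \<and> col_homog a' \<and> col_homog b' \<and> col_homog c' \<and> col_homog d'
    \<and> std_homog 1 a' \<and> std_homog 1 c' \<and> std_homog 2 b' \<and> std_homog 2 d'
    \<and> tri 1 2 3 T = a' * b' + c' * d')"

lemma G3_gen:
  assumes pqr: "p \<in> {1,2,3}" "q \<in> {1,2,3}" "r \<in> {1,2,3}" "p \<noteq> q" "p \<noteq> r" "q \<noteq> r"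
    and HF: "\<And>x. Fcol T x = Fgen p q r U x" and HT: "tri 1 2 3 T = tri p q r U"
    and i: "i0 \<in> {1..4}" "i1 \<in> {1..4}"
    and D: "\<alpha> (i0,p) * \<gamma> (i1,p) - \<alpha> (i1,p) * \<gamma> (i0,p) \<noteq> 0"
    and V: "\<And>x. Lc \<alpha> p x = 0 \<Longrightarrow> Lc \<gamma> p x = 0 \<Longrightarrow> Fcol T x = 0"
  shows "GoalT T"
proof -
  define DD where "DD = \<alpha> (i0,p) * \<gamma> (i1,p) - \<alpha> (i1,p) * \<gamma> (i0,p)"
  define la where "la a = (\<alpha> (a,p) * \<gamma> (i1,p) - \<alpha> (i1,p) * \<gamma> (a,p)) / DD" for a
  define mu where "mu a = (\<alpha> (i0,p) * \<gamma> (a,p) - \<alpha> (a,p) * \<gamma> (i0,p)) / DD" for a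
  have DD: "DD \<noteq> 0" using D DD_def by simp
  have rel: "U a b c = la a * U i0 b c + mu a * U i1 b c"
    if abc: "a \<in> {1..4}" "b \<in> {1..4}" "c \<in> {1..4}" for a b c
  proof -
    define v where "v = (\<lambda>i. dl a i - la a * dl i0 i - mu a * dl i1 i)"
    define w where "w = (\<lambda>i. dl b i - 0 * dl i0 i)"
    define x where "x = pt3 p q r v w (dl c)"
    have "Lc \<alpha> p x = \<alpha> (a,p) - la a * \<alpha> (i0,p) - mu a * \<alpha> (i1,p)"
      unfolding x_def Lc_pt3_p v_def by (rule sdl3[OF abc(1) i])
    also have "\<dots> = 0" using DD unfolding la_def mu_def DD_def by (simp add: field_simps)
    finally have 1: "Lc \<alpha> p x = 0" .
    have "Lc \<gamma> p x = \<gamma> (a,p) - la a * \<gamma> (i0,p) - mu a * \<gamma> (i1,p)"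
      unfolding x_def Lc_pt3_p v_def by (rule sdl3[OF abc(1) i])
    also have "\<dots> = 0" using DD unfolding la_def mu_def DD_def by (simp add: field_simps)
    finally have 2: "Lc \<gamma> p x = 0" .
    have "0 = Fgen p q r U x" using V[OF 1 2] HF by simp
    also have "\<dots> = (\<Sum>a'\<in>{1..4}. \<Sum>b'\<in>{1..4}. \<Sum>c'\<in>{1..4}. U a' b' c' * v a' * w b' * dl c c')"
      unfolding x_def by (rule Fgen_pt3[OF pqr(4,5,6)])
    also have "\<dots> = (U a b c - 0 * U a i0 c) - la a * (U i0 b c - 0 * U i0 i0 c) - mu a * (U i1 b c - 0 * U i1 i0 c)"
      unfolding v_def w_def by (rule tri_eval[OF abc i(1,2) i(1)])
    finally show ?thesis by (simp add: algebra_simps)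
  qed
  have "tri p q r U = lin p la * bil q r (U i0) + lin p mu * bil q r (U i1)"
    by (rule R1) (rule rel)
  thus ?thesis unfolding GoalT_def HT using lin_props[OF pqr(1)] bil_props[OF pqr(2,3)] by blast
qed

lemma G2_gen:
  assumes pqr: "p \<in> {1,2,3}" "q \<in> {1,2,3}" "r \<in> {1,2,3}" "p \<noteq> q" "p \<noteq> r" "q \<noteq> r"
    and HF: "\<And>x. Fcol T x = Fgen p q r U x" and HT: "tri 1 2 3 T = tri p q r U"
    and i: "i0 \<in> {1..4}" "j0 \<in> {1..4}"
    and nz: "\<alpha> (i0,p) \<noteq> 0" "\<gamma> (j0,q) \<noteq> 0"
    and V: "\<And>x. Lc \<alpha> p x = 0 \<Longrightarrow> Lc \<gamma> q x = 0 \<Longrightarrow> Fcol T x = 0"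
  shows "GoalT T"
proof -
  define ka where "ka a = \<alpha> (a,p) / \<alpha> (i0,p)" for a
  define g where "g b = \<gamma> (b,q) / \<gamma> (j0,q)" for b
  have rel: "U a b c = ka a * U i0 b c + g b * (U a j0 c - ka a * U i0 j0 c)"
    if abc: "a \<in> {1..4}" "b \<in> {1..4}" "c \<in> {1..4}" for a b c
  proof -
    define v where "v = (\<lambda>i. dl a i - ka a * dl i0 i - 0 * dl i0 i)"
    define w where "w = (\<lambda>i. dl b i - g b * dl j0 i)"
    define x where "x = pt3 p q r v w (dl c)"
    have "Lc \<alpha> p x = \<alpha> (a,p) - ka a * \<alpha> (i0,p) - 0 * \<alpha> (i0,p)"
      unfolding x_def Lc_pt3_p v_def by (rule sdl3[OF abc(1) i(1) i(1)])
    also have "\<dots> = 0" using nz unfolding ka_def by simp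
    finally have 1: "Lc \<alpha> p x = 0" .
    have "Lc \<gamma> q x = \<gamma> (b,q) - g b * \<gamma> (j0,q)"
      unfolding x_def Lc_pt3_q[OF pqr(4)] w_def by (rule sdl2[OF abc(2) i(2)])
    also have "\<dots> = 0" using nz unfolding g_def by simp
    finally have 2: "Lc \<gamma> q x = 0" .
    have "0 = Fgen p q r U x" using V[OF 1 2] HF by simp
    also have "\<dots> = (\<Sum>a'\<in>{1..4}. \<Sum>b'\<in>{1..4}. \<Sum>c'\<in>{1..4}. U a' b' c' * v a' * w b' * dl c c')"
      unfolding x_def by (rule Fgen_pt3[OF pqr(4,5,6)])
    also have "\<dots> = (U a b c - g b * U a j0 c) - ka a * (U i0 b c - g b * U i0 j0 c) - 0 * (U i0 b c - g b * U i0 j0 c)"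
      unfolding v_def w_def by (rule tri_eval[OF abc i(1) i(1) i(2)])
    finally show ?thesis by (simp add: algebra_simps)
  qed
  have "tri p q r U = lin p ka * bil q r (U i0) + lin q g * bil p r (\<lambda>a c. U a j0 c - ka a * U i0 j0 c)"
    by (rule R2) (rule rel)
  thus ?thesis unfolding GoalT_def HT using lin_props[OF pqr(1)] lin_props[OF pqr(2)]
      bil_props[OF pqr(2,3)] bil_props[OF pqr(1,3)] by blast
qed

lemma perm213: "Fcol T x = Fgen 2 1 3 (\<lambda>b a c. T a b c) x" "tri 1 2 3 T = tri 2 1 3 (\<lambda>b a c. T a b c)"
  using Fgen_swap12[of 1 2 3 T x] tri_swap12[of 1 2 3 T] by (simp_all add: Fcol_Fgen)

lemma perm132: "Fcol T x = Fgen 1 3 2 (\<lambda>a c b. T a b c) x" "tri 1 2 3 T = tri 1 3 2 (\<lambda>a c b. T a b c)"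
  using Fgen_swap23[of 1 2 3 T x] tri_swap23[of 1 2 3 T] by (simp_all add: Fcol_Fgen)

lemma perm312: "Fcol T x = Fgen 3 1 2 (\<lambda>c a b. T a b c) x" "tri 1 2 3 T = tri 3 1 2 (\<lambda>c a b. T a b c)"
  using perm132(1)[of T x] perm132(2)[of T] Fgen_swap12[of 1 3 2 "\<lambda>a c b. T a b c" x] tri_swap12[of 1 3 2 "\<lambda>a c b. T a b c"]
  by simp_all

lemma perm231: "Fcol T x = Fgen 2 3 1 (\<lambda>b c a. T a b c) x" "tri 1 2 3 T = tri 2 3 1 (\<lambda>b c a. T a b c)"
  using perm213(1)[of T x] perm213(2)[of T] Fgen_swap23[of 2 1 3 "\<lambda>b a c. T a b c" x] tri_swap23[of 2 1 3 "\<lambda>b a c. T a b c"]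
  by simp_all

lemma G3_all:
  assumes p: "p \<in> {1,2,3}" and i: "i0 \<in> {1..4}" "i1 \<in> {1..4}"
    and D: "\<alpha> (i0,p) * \<gamma> (i1,p) - \<alpha> (i1,p) * \<gamma> (i0,p) \<noteq> 0"
    and V: "\<And>x. Lc \<alpha> p x = 0 \<Longrightarrow> Lc \<gamma> p x = 0 \<Longrightarrow> Fcol T x = 0"
  shows "GoalT T"
proof -
  consider "p = 1" | "p = 2" | "p = 3" using p by auto
  thus ?thesis
  proof cases
    case 1
    show ?thesis using i D V unfolding 1
      by (intro G3_gen[of 1 2 3 T T i0 i1 \<alpha> \<gamma>]) (auto simp: Fcol_Fgen)
  next
    case 2
    show ?thesis using i D V unfolding 2
      by (intro G3_gen[of 2 1 3 T "\<lambda>b a c. T a b c" i0 i1 \<alpha> \<gamma>, OF _ _ _ _ _ _ perm213(1) perm213(2)]) auto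
  next
    case 3
    show ?thesis using i D V unfolding 3
      by (intro G3_gen[of 3 1 2 T "\<lambda>c a b. T a b c" i0 i1 \<alpha> \<gamma>, OF _ _ _ _ _ _ perm312(1) perm312(2)]) auto
  qed
qed

lemma G2_all:
  assumes pq: "p \<in> {1,2,3}" "q \<in> {1,2,3}" "p < q" and i: "i0 \<in> {1..4}" "j0 \<in> {1..4}"
    and nz: "\<alpha> (i0,p) \<noteq> 0" "\<gamma> (j0,q) \<noteq> 0"
    and V: "\<And>x. Lc \<alpha> p x = 0 \<Longrightarrow> Lc \<gamma> q x = 0 \<Longrightarrow> Fcol T x = 0"
  shows "GoalT T"
proof -
  consider "p = 1" "q = 2" | "p = 1" "q = 3" | "p = 2" "q = 3" using pq by auto
  thus ?thesis
  proof cases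
    case 1
    show ?thesis using i nz V unfolding 1
      by (intro G2_gen[of 1 2 3 T T i0 j0 \<alpha> \<gamma>]) (auto simp: Fcol_Fgen)
  next
    case 2
    show ?thesis using i nz V unfolding 2
      by (intro G2_gen[of 1 3 2 T "\<lambda>a c b. T a b c" i0 j0 \<alpha> \<gamma>, OF _ _ _ _ _ _ perm132(1) perm132(2)]) auto
  next
    case 3
    show ?thesis using i nz V unfolding 3
      by (intro G2_gen[of 2 3 1 T "\<lambda>b c a. T a b c" i0 j0 \<alpha> \<gamma>, OF _ _ _ _ _ _ perm231(1) perm231(2)]) auto
  qed
qed



definition sc :: "complex \<Rightarrow> (nat\<times>nat \<Rightarrow> complex) \<Rightarrow> nat\<times>nat \<Rightarrow> complex" where
  "sc s x = (\<lambda>(i,j). s^(j-1) * x (i,j))"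

definition addv :: "(nat\<times>nat \<Rightarrow> complex) \<Rightarrow> nat\<times>nat \<Rightarrow> complex \<Rightarrow> nat\<times>nat \<Rightarrow> complex" where
  "addv x v c = (\<lambda>w. x w + (if w = v then c else 0))"

definition lowz :: "(nat\<times>nat \<Rightarrow> complex) \<Rightarrow> nat \<Rightarrow> bool" where
  "lowz \<alpha> p \<longleftrightarrow> (\<forall>j i. 1 \<le> j \<longrightarrow> j < p \<longrightarrow> i \<in> {1..4} \<longrightarrow> \<alpha> (i,j) = 0)"

definition Gp :: "(nat\<times>nat \<Rightarrow> complex) \<Rightarrow> nat \<Rightarrow> complex \<Rightarrow> (nat\<times>nat \<Rightarrow> complex) \<Rightarrow> complex" where
  "Gp \<alpha> p s x = (if p = 1 then Lc \<alpha> 1 x + s * Lc \<alpha> 2 x + s^2 * Lc \<alpha> 3 x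
      else if p = 2 then Lc \<alpha> 2 x + s * Lc \<alpha> 3 x else Lc \<alpha> 3 x)"

lemma Fcol_sc: "Fcol T (sc s x) = s^3 * Fcol T x"
  unfolding Fcol_def sum_distrib_left
  by (intro sum.cong refl) (simp add: sc_def power2_eq_square power3_eq_cube mult_ac)

lemma Lc_sc: "Lc \<alpha> j (sc s x) = s^(j-1) * Lc \<alpha> j x"
  by (simp add: Lc_def sc_def sum_distrib_left mult_ac)

lemma Lc_lowz: "lowz \<alpha> p \<Longrightarrow> 1 \<le> j \<Longrightarrow> j < p \<Longrightarrow> Lc \<alpha> j x = 0"
  by (simp add: lowz_def Lc_def)

lemma LL_sc: "p \<in> {1,2,3} \<Longrightarrow> lowz \<alpha> p \<Longrightarrow> LL \<alpha> (sc s x) = s^(p-1) * Gp \<alpha> p s x"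
  by (auto simp: LL_def Lc_sc Gp_def Lc_lowz algebra_simps power2_eq_square)

lemma Gp0: "p \<in> {1,2,3} \<Longrightarrow> Gp \<alpha> p 0 x = Lc \<alpha> p x"
  by (auto simp: Gp_def)

lemma Lc_addv: "i \<in> {1..4} \<Longrightarrow> Lc \<alpha> j (addv x (i,p) c) = Lc \<alpha> j x + (if j = p then \<alpha> (i,p) * c else 0)"
proof -
  assume i: "i \<in> {1..4}"
  have "Lc \<alpha> j (addv x (i,p) c) = Lc \<alpha> j x + (\<Sum>k\<in>{1..4}. \<alpha> (k,j) * (if (k,j) = (i,p) then c else 0))"
    by (simp add: Lc_def addv_def distrib_left sum.distrib)
  also have "(\<Sum>k\<in>{1..4}. \<alpha> (k,j) * (if (k,j) = (i,p) then c else 0)) = (if j = p then \<alpha> (i,p) * c else 0)"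
  proof (cases "j = p")
    case True
    have "(\<Sum>k\<in>{1..4}. \<alpha> (k,j) * (if (k,j) = (i,p) then c else 0)) = (\<Sum>k\<in>{1..4}. if k = i then \<alpha> (i,p) * c else 0)"
      by (rule sum.cong) (auto simp: True)
    also have "\<dots> = \<alpha> (i,p) * c" using i by simp
    finally show ?thesis using True by simp
  qed simp
  finally show ?thesis .
qed

lemma Gp_shift: "p \<in> {1,2,3} \<Longrightarrow> (\<And>j. Lc \<alpha> j y = Lc \<alpha> j x + (if j = p then d else 0)) \<Longrightarrow>
   Gp \<alpha> p s y = Gp \<alpha> p s x + d"
  by (auto simp: Gp_def)

lemma Gp_cong: "q \<in> {1,2,3} \<Longrightarrow> (\<And>j. q \<le> j \<Longrightarrow> Lc \<gamma> j y = Lc \<gamma> j x) \<Longrightarrow>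
   Gp \<gamma> q s y = Gp \<gamma> q s x"
  by (auto simp: Gp_def)

lemma zero_at0:
  fixes f :: "complex \<Rightarrow> complex"
  assumes "continuous_on UNIV f" "\<And>s. s \<noteq> 0 \<Longrightarrow> f s = 0"
  shows "f 0 = 0"
proof -
  have "isCont f 0" using assms(1) continuous_on_eq_continuous_at by blast
  hence 1: "f \<midarrow>0\<rightarrow> f 0" by (simp add: isCont_def)
  have "eventually (\<lambda>s. f s = 0) (at 0)"
    unfolding eventually_at_filter by (simp add: assms(2))
  hence 2: "f \<midarrow>0\<rightarrow> 0" by (rule tendsto_eventually)
  from 1 2 show ?thesis by (rule LIM_unique)
qed

abbreviation cont :: "(complex \<Rightarrow> complex) \<Rightarrow> bool" where "cont f \<equiv> continuous_on UNIV f"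

lemma cont_Lc: "(\<And>v. cont (\<lambda>s. z s v)) \<Longrightarrow> cont (\<lambda>s. Lc \<alpha> j (z s))"
  unfolding Lc_def by (intro continuous_intros) auto

lemma cont_Gp: "(\<And>v. cont (\<lambda>s. z s v)) \<Longrightarrow> cont (\<lambda>s. Gp \<alpha> p s (z s))"
  unfolding Gp_def by (cases "p = 1"; cases "p = 2") (auto intro!: continuous_intros cont_Lc)

lemma cont_addv:
  assumes "\<And>v. cont (\<lambda>s. z s v)" "cont c" shows "cont (\<lambda>s. addv (z s) w (c s) v)"
proof (cases "v = w")
  case True
  thus ?thesis unfolding addv_def by (simp add: continuous_on_add assms)
next
  case False
  thus ?thesis unfolding addv_def by (simp add: assms)
qed

lemma cont_Fcol: "(\<And>v. cont (\<lambda>s. z s v)) \<Longrightarrow> cont (\<lambda>s. Fcol T (z s))"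
  unfolding Fcol_def by (intro continuous_intros) auto

lemma addv0: "addv x v 0 = x" by (simp add: addv_def)



lemma cramer1: "(d::complex) = a0*c1 - a1*c0 \<Longrightarrow> d \<noteq> 0 \<Longrightarrow>
   g + (a0 * ((- g * c1 + h * a1) / d) + a1 * ((- h * a0 + g * c0) / d)) = 0"
proof -
  assume d: "d = a0*c1 - a1*c0" "d \<noteq> 0"
  have "a0 * ((- g * c1 + h * a1) / d) + a1 * ((- h * a0 + g * c0) / d) = (a0*(-g*c1+h*a1) + a1*(-h*a0+g*c0))/d"
    by (simp add: add_divide_distrib)
  also have "a0*(-g*c1+h*a1) + a1*(-h*a0+g*c0) = -g*d" unfolding d(1) by (simp add: algebra_simps)
  finally show ?thesis using d(2) by simp
qed

lemma cramer2: "(d::complex) = a0*c1 - a1*c0 \<Longrightarrow> d \<noteq> 0 \<Longrightarrow>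
   h + (c0 * ((- g * c1 + h * a1) / d) + c1 * ((- h * a0 + g * c0) / d)) = 0"
proof -
  assume d: "d = a0*c1 - a1*c0" "d \<noteq> 0"
  have "c0 * ((- g * c1 + h * a1) / d) + c1 * ((- h * a0 + g * c0) / d) = (c0*(-g*c1+h*a1) + c1*(-h*a0+g*c0))/d"
    by (simp add: add_divide_distrib)
  also have "c0*(-g*c1+h*a1) + c1*(-h*a0+g*c0) = -h*d" unfolding d(1) by (simp add: algebra_simps)
  finally show ?thesis using d(2) by simp
qed

lemma limQ:
  assumes p: "p \<in> {1,2,3}" and i: "i0 \<in> {1..4}" "i1 \<in> {1..4}"
    and lz: "lowz \<alpha> p" "lowz \<gamma> p"
    and D: "\<alpha> (i0,p) * \<gamma> (i1,p) - \<alpha> (i1,p) * \<gamma> (i0,p) \<noteq> 0"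
    and V: "\<And>x. LL \<alpha> x = 0 \<Longrightarrow> LL \<gamma> x = 0 \<Longrightarrow> Fcol T x = 0"
    and x: "Lc \<alpha> p x = 0" "Lc \<gamma> p x = 0"
  shows "Fcol T x = 0"
proof -
  define DD where "DD = \<alpha> (i0,p) * \<gamma> (i1,p) - \<alpha> (i1,p) * \<gamma> (i0,p)"
  have DD: "DD \<noteq> 0" using D DD_def by simp
  define la where "la s = (- Gp \<alpha> p s x * \<gamma> (i1,p) + Gp \<gamma> p s x * \<alpha> (i1,p)) / DD" for s
  define mu where "mu s = (- Gp \<gamma> p s x * \<alpha> (i0,p) + Gp \<alpha> p s x * \<gamma> (i0,p)) / DD" for s
  define y where "y s = addv (addv x (i0,p) (la s)) (i1,p) (mu s)" for s
  have Lcy: "Lc \<beta> j (y s) = Lc \<beta> j x + (if j = p then \<beta> (i0,p) * la s + \<beta> (i1,p) * mu s else 0)" for \<beta> j s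
    unfolding y_def by (simp add: Lc_addv[OF i(1)] Lc_addv[OF i(2)])
  have Ga: "Gp \<alpha> p s (y s) = 0" for s
  proof -
    have "Gp \<alpha> p s (y s) = Gp \<alpha> p s x + (\<alpha> (i0,p) * la s + \<alpha> (i1,p) * mu s)"
      by (rule Gp_shift[OF p]) (rule Lcy)
    also have "\<dots> = 0" unfolding la_def mu_def by (rule cramer1[OF DD_def DD])
    finally show ?thesis .
  qed
  have Gc: "Gp \<gamma> p s (y s) = 0" for s
  proof -
    have "Gp \<gamma> p s (y s) = Gp \<gamma> p s x + (\<gamma> (i0,p) * la s + \<gamma> (i1,p) * mu s)"
      by (rule Gp_shift[OF p]) (rule Lcy)
    also have "\<dots> = 0" unfolding la_def mu_def by (rule cramer2[OF DD_def DD])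
    finally show ?thesis .
  qed
  have Z: "Fcol T (y s) = 0" if s: "s \<noteq> 0" for s
  proof -
    have "LL \<alpha> (sc s (y s)) = 0" by (simp add: LL_sc[OF p lz(1)] Ga)
    moreover have "LL \<gamma> (sc s (y s)) = 0" by (simp add: LL_sc[OF p lz(2)] Gc)
    ultimately have "Fcol T (sc s (y s)) = 0" by (rule V)
    thus ?thesis using s by (simp add: Fcol_sc)
  qed
  have cx: "cont (\<lambda>s. x v)" for v by simp
  have cla: "cont la" unfolding la_def[abs_def]
    by (intro continuous_intros cont_Gp[of "\<lambda>s. x"]) (simp_all add: DD)
  have cmu: "cont mu" unfolding mu_def[abs_def]
    by (intro continuous_intros cont_Gp[of "\<lambda>s. x"]) (simp_all add: DD)
  have cy: "cont (\<lambda>s. y s v)" for v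
    unfolding y_def by (intro cont_addv cmu cla cx)
  have "Fcol T (y 0) = 0"
    by (rule zero_at0[of "\<lambda>s. Fcol T (y s)"]) (auto intro: cont_Fcol cy Z)
  moreover have "la 0 = 0" "mu 0 = 0" unfolding la_def mu_def by (simp_all add: Gp0[OF p] x)
  ultimately show ?thesis by (simp add: y_def addv0)
qed

lemma limP:
  assumes p: "p \<in> {1,2,3}" "q \<in> {1,2,3}" "p < q" and i: "i0 \<in> {1..4}" "j0 \<in> {1..4}"
    and lz: "lowz \<alpha> p" "lowz \<gamma> q"
    and nz: "\<alpha> (i0,p) \<noteq> 0" "\<gamma> (j0,q) \<noteq> 0"
    and V: "\<And>x. LL \<alpha> x = 0 \<Longrightarrow> LL \<gamma> x = 0 \<Longrightarrow> Fcol T x = 0"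
    and x: "Lc \<alpha> p x = 0" "Lc \<gamma> q x = 0"
  shows "Fcol T x = 0"
proof -
  define mu where "mu s = - Gp \<gamma> q s x / \<gamma> (j0,q)" for s
  define x1 where "x1 s = addv x (j0,q) (mu s)" for s
  define la where "la s = - Gp \<alpha> p s (x1 s) / \<alpha> (i0,p)" for s
  define y where "y s = addv (x1 s) (i0,p) (la s)" for s
  have Lcx1: "Lc \<beta> j (x1 s) = Lc \<beta> j x + (if j = q then \<beta> (j0,q) * mu s else 0)" for \<beta> j s
    unfolding x1_def by (simp add: Lc_addv[OF i(1)] Lc_addv[OF i(2)])
  have Lcy: "Lc \<beta> j (y s) = Lc \<beta> j (x1 s) + (if j = p then \<beta> (i0,p) * la s else 0)" for \<beta> j s
    unfolding y_def by (simp add: Lc_addv[OF i(1)] Lc_addv[OF i(2)])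
  have Ga: "Gp \<alpha> p s (y s) = 0" for s
  proof -
    have "Gp \<alpha> p s (y s) = Gp \<alpha> p s (x1 s) + \<alpha> (i0,p) * la s"
      by (rule Gp_shift[OF p(1)]) (rule Lcy)
    also have "\<dots> = 0" using nz unfolding la_def by simp
    finally show ?thesis .
  qed
  have Gc: "Gp \<gamma> q s (y s) = 0" for s
  proof -
    have "Gp \<gamma> q s (y s) = Gp \<gamma> q s (x1 s)"
      by (rule Gp_cong[OF p(2)]) (use p(3) Lcy in auto)
    also have "\<dots> = Gp \<gamma> q s x + \<gamma> (j0,q) * mu s"
      by (rule Gp_shift[OF p(2)]) (rule Lcx1)
    also have "\<dots> = 0" using nz unfolding mu_def by simp
    finally show ?thesis .
  qed
  have Z: "Fcol T (y s) = 0" if s: "s \<noteq> 0" for s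
  proof -
    have "LL \<alpha> (sc s (y s)) = 0" by (simp add: LL_sc[OF p(1) lz(1)] Ga)
    moreover have "LL \<gamma> (sc s (y s)) = 0" by (simp add: LL_sc[OF p(2) lz(2)] Gc)
    ultimately have "Fcol T (sc s (y s)) = 0" by (rule V)
    thus ?thesis using s by (simp add: Fcol_sc)
  qed
  have cx: "cont (\<lambda>s. x v)" for v by simp
  have cmu: "cont mu" unfolding mu_def[abs_def]
    by (intro continuous_intros cont_Gp[of "\<lambda>s. x"]) (simp_all add: nz)
  have cx1: "cont (\<lambda>s. x1 s v)" for v
    unfolding x1_def by (intro cont_addv cmu cx)
  have cla: "cont la" unfolding la_def[abs_def]
    by (intro continuous_intros cont_Gp[of x1] cx1) (simp_all add: nz)
  have cy: "cont (\<lambda>s. y s v)" for v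
    unfolding y_def by (intro cont_addv cla cx1)
  have "Fcol T (y 0) = 0"
    by (rule zero_at0[of "\<lambda>s. Fcol T (y s)"]) (auto intro: cont_Fcol cy Z)
  moreover have "mu 0 = 0" unfolding mu_def by (simp add: Gp0[OF p(2)] x)
  hence "x1 0 = x" by (simp add: x1_def addv0)
  moreover have "la 0 = 0" unfolding la_def using \<open>x1 0 = x\<close> by (simp add: Gp0[OF p(1)] x)
  ultimately show ?thesis by (simp add: y_def addv0)
qed



lemma caseQ:
  assumes p: "p \<in> {1,2,3}" and i: "i0 \<in> {1..4}" "i1 \<in> {1..4}"
    and lz: "lowz \<alpha> p" "lowz \<gamma> p"
    and D: "\<alpha> (i0,p) * \<gamma> (i1,p) - \<alpha> (i1,p) * \<gamma> (i0,p) \<noteq> 0"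
    and V: "\<And>x. LL \<alpha> x = 0 \<Longrightarrow> LL \<gamma> x = 0 \<Longrightarrow> Fcol T x = 0"
  shows "GoalT T"
  by (rule G3_all[of p i0 i1 \<alpha> \<gamma> T, OF p i D]) (rule limQ[OF p i lz D V])

lemma caseP:
  assumes p: "p \<in> {1,2,3}" "q \<in> {1,2,3}" "p < q" and i: "i0 \<in> {1..4}" "j0 \<in> {1..4}"
    and lz: "lowz \<alpha> p" "lowz \<gamma> q"
    and nz: "\<alpha> (i0,p) \<noteq> 0" "\<gamma> (j0,q) \<noteq> 0"
    and V: "\<And>x. LL \<alpha> x = 0 \<Longrightarrow> LL \<gamma> x = 0 \<Longrightarrow> Fcol T x = 0"
  shows "GoalT T"
  by (rule G2_all[of p q i0 j0 \<alpha> \<gamma> T, OF p i nz]) (rule limP[OF p i lz nz V])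

definition dv :: "nat \<times> nat \<Rightarrow> nat \<times> nat \<Rightarrow> complex" where "dv w v = (if v = w then 1 else 0)"

lemma lowz_dv: "lowz (dv (i,p)) p" by (simp add: lowz_def dv_def)

lemma caseSingle:
  assumes p: "p \<in> {1,2,3}" and i: "i0 \<in> {1..4}" and lz: "lowz \<alpha> p" and nz: "\<alpha> (i0,p) \<noteq> 0"
    and V: "\<And>x. LL \<alpha> x = 0 \<Longrightarrow> Fcol T x = 0"
  shows "GoalT T"
proof -
  define i1 where "i1 = (if i0 = 1 then 2 else (1::nat))"
  have i1: "i1 \<in> {1..4}" "i1 \<noteq> i0" by (auto simp: i1_def)
  show ?thesis
  proof (rule caseQ[OF p i i1(1) lz lowz_dv])
    show "\<alpha> (i0,p) * dv (i1,p) (i1,p) - \<alpha> (i1,p) * dv (i1,p) (i0,p) \<noteq> 0"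
      using nz i1(2) by (simp add: dv_def)
  qed (rule V)
qed

lemma caseZero:
  assumes V: "\<And>x. Fcol T x = 0"
  shows "GoalT T"
  by (rule caseQ[of 1 1 2 "dv (1,1)" "dv (2,1)"]) (auto simp: dv_def lowz_def V)

definition nzc :: "(nat\<times>nat \<Rightarrow> complex) \<Rightarrow> nat \<Rightarrow> bool" where
  "nzc \<alpha> j \<longleftrightarrow> (\<exists>i\<in>{1..4}. \<alpha> (i,j) \<noteq> 0)"

lemma low_ex:
  assumes "\<exists>j\<in>{1,2,3}. nzc \<alpha> j"
  shows "\<exists>p\<in>{1,2,3}. \<exists>i0\<in>{1..4}. \<alpha> (i0,p) \<noteq> 0 \<and> lowz \<alpha> p \<and> (\<forall>j. 1 \<le> j \<longrightarrow> j < p \<longrightarrow> \<not> nzc \<alpha> j)"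
proof -
  obtain p where p: "p \<in> {1,2,3}" "nzc \<alpha> p" "\<forall>j. 1 \<le> j \<longrightarrow> j < p \<longrightarrow> \<not> nzc \<alpha> j"
  proof (cases "nzc \<alpha> 1")
    case True thus ?thesis using that[of 1] by auto
  next
    case n1: False
    show ?thesis
    proof (cases "nzc \<alpha> 2")
      case True
      have "\<forall>j. 1 \<le> j \<longrightarrow> j < 2 \<longrightarrow> \<not> nzc \<alpha> j" using n1 by (auto simp: less_2_cases_iff)
      thus ?thesis using that[of 2] True by auto
    next
      case n2: False
      hence n3: "nzc \<alpha> 3" using assms n1 by auto
      have "\<forall>j. 1 \<le> j \<longrightarrow> j < 3 \<longrightarrow> \<not> nzc \<alpha> j"
      proof (intro allI impI)
        fix j :: nat assume "1 \<le> j" "j < 3"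
        hence "j = 1 \<or> j = 2" by auto
        thus "\<not> nzc \<alpha> j" using n1 n2 by auto
      qed
      thus ?thesis using that[of 3] n3 by auto
    qed
  qed
  then obtain i0 where i0: "i0 \<in> {1..4}" "\<alpha> (i0,p) \<noteq> 0" unfolding nzc_def by blast
  have "lowz \<alpha> p" using p(3) unfolding lowz_def nzc_def by blast
  thus ?thesis using p i0 by blast
qed

lemma Lc_zero: "\<not> nzc \<alpha> j \<Longrightarrow> Lc \<alpha> j x = 0"
  by (simp add: nzc_def Lc_def)

lemma allzero: "\<not> (\<exists>j\<in>{1,2,3}. nzc \<alpha> j) \<Longrightarrow> LL \<alpha> x = 0"
  by (simp add: LL_def Lc_zero)

lemma LL_lin: "LL (\<lambda>v. \<gamma> v - k * \<alpha> v) x = LL \<gamma> x - k * LL \<alpha> x"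
  by (simp add: LL_def Lc_def sum_subtractf sum_distrib_left algebra_simps)

lemma mainV:
  assumes V: "\<And>x. LL \<alpha> x = 0 \<Longrightarrow> LL \<gamma> x = 0 \<Longrightarrow> Fcol T x = 0"
  shows "GoalT T"
proof (cases "\<exists>j\<in>{1,2,3}. nzc \<alpha> j")
  case Fa: False
  hence La: "LL \<alpha> x = 0" for x by (rule allzero)
  show ?thesis
  proof (cases "\<exists>j\<in>{1,2,3}. nzc \<gamma> j")
    case False
    hence Lc0: "LL \<gamma> x = 0" for x by (rule allzero)
    show ?thesis by (rule caseZero) (rule V[OF La Lc0])
  next
    case True
    then obtain q j0 where q: "q\<in>{1,2,3}" "j0\<in>{1..4}" "\<gamma> (j0,q) \<noteq> 0" "lowz \<gamma> q"
      using low_ex by blast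
    show ?thesis by (rule caseSingle[OF q(1,2,4,3)]) (rule V[OF La])
  qed
next
  case Ta: True
  then obtain p i0 where pa: "p\<in>{1,2,3}" "i0\<in>{1..4}" "\<alpha> (i0,p) \<noteq> 0" "lowz \<alpha> p"
      "\<forall>j. 1 \<le> j \<longrightarrow> j < p \<longrightarrow> \<not> nzc \<alpha> j"
    using low_ex by blast
  show ?thesis
  proof (cases "\<exists>j\<in>{1,2,3}. nzc \<gamma> j")
    case False
    hence Lc0: "LL \<gamma> x = 0" for x by (rule allzero)
    show ?thesis by (rule caseSingle[OF pa(1,2,4,3)]) (rule V[OF _ Lc0])
  next
    case True
    then obtain q j0 where qc: "q\<in>{1,2,3}" "j0\<in>{1..4}" "\<gamma> (j0,q) \<noteq> 0" "lowz \<gamma> q"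
      "\<forall>j. 1 \<le> j \<longrightarrow> j < q \<longrightarrow> \<not> nzc \<gamma> j"
      using low_ex by blast
    consider "p < q" | "q < p" | "p = q" by linarith
    thus ?thesis
    proof cases
      case 1
      show ?thesis by (rule caseP[OF pa(1) qc(1) 1 pa(2) qc(2) pa(4) qc(4) pa(3) qc(3) V])
    next
      case 2
      show ?thesis by (rule caseP[OF qc(1) pa(1) 2 qc(2) pa(2) qc(4) pa(4) qc(3) pa(3)]) (rule V)
    next
      case 3
      have lzg: "lowz \<gamma> p" using qc(4) 3 by simp
      show ?thesis
      proof (cases "\<exists>k0\<in>{1..4}. \<exists>k1\<in>{1..4}. \<alpha> (k0,p) * \<gamma> (k1,p) - \<alpha> (k1,p) * \<gamma> (k0,p) \<noteq> 0")
        case True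
        then obtain k0 k1 where k: "k0 \<in> {1..4}" "k1 \<in> {1..4}" "\<alpha> (k0,p) * \<gamma> (k1,p) - \<alpha> (k1,p) * \<gamma> (k0,p) \<noteq> 0"
          by blast
        show ?thesis by (rule caseQ[OF pa(1) k(1,2) pa(4) lzg k(3) V])
      next
        case False
        define \<kappa> where "\<kappa> = \<gamma> (i0,p) / \<alpha> (i0,p)"
        define gg where "gg = (\<lambda>v. \<gamma> v - \<kappa> * \<alpha> v)"
        have propg: "\<gamma> (i,p) = \<kappa> * \<alpha> (i,p)" if i: "i \<in> {1..4}" for i
        proof -
          have "\<alpha> (i0,p) * \<gamma> (i,p) - \<alpha> (i,p) * \<gamma> (i0,p) = 0" using False pa(2) i by blast
          thus ?thesis using pa(3) unfolding \<kappa>_def by (simp add: field_simps)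
        qed
        have V': "Fcol T x = 0" if "LL \<alpha> x = 0" "LL gg x = 0" for x
        proof -
          have "LL \<gamma> x = 0" using that unfolding gg_def LL_lin by simp
          thus ?thesis using V that(1) by blast
        qed
        have zc: "\<not> nzc gg j" if "1 \<le> j" "j \<le> p" for j
        proof (cases "j = p")
          case True thus ?thesis using propg unfolding nzc_def gg_def by auto
        next
          case False
          hence "j < p" using that by simp
          hence "\<not> nzc \<alpha> j" "\<not> nzc \<gamma> j" using pa(5) qc(5) 3 that(1) by auto
          thus ?thesis unfolding nzc_def gg_def by auto
        qed
        show ?thesis
        proof (cases "\<exists>j\<in>{1,2,3}. nzc gg j")
          case False
          hence L0: "LL gg x = 0" for x by (rule allzero)
          show ?thesis by (rule caseSingle[OF pa(1,2,4,3)]) (rule V'[OF _ L0])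
        next
          case True
          then obtain q' j1 where q': "q'\<in>{1,2,3}" "j1\<in>{1..4}" "gg (j1,q') \<noteq> 0" "lowz gg q'"
            using low_ex by blast
          have "nzc gg q'" using q'(2,3) unfolding nzc_def by blast
          hence pq: "p < q'" using zc[of q'] q'(1) by fastforce
          show ?thesis by (rule caseP[OF pa(1) q'(1) pq pa(2) q'(2) pa(4) q'(4) pa(3) q'(3)]) (rule V')
        qed
      qed
    qed
  qed
qed

theorem lemma7p3:
  fixes \<Delta> a b c d :: mpoly
  assumes "in_S \<Delta>" and "col_homog_deg (1, 1, 1) \<Delta>"
    and "in_S a" and "in_S b" and "in_S c" and "in_S d"
    and "std_homog 1 a" and "std_homog 1 c"
    and "std_homog 2 b" and "std_homog 2 d"
    and "\<Delta> = a * b + c * d"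
  shows "\<exists>a' b' c' d'. in_S a' \<and> in_S b' \<and> in_S c' \<and> in_S d'
    \<and> col_homog a' \<and> col_homog b' \<and> col_homog c' \<and> col_homog d'
    \<and> std_homog 1 a' \<and> std_homog 1 c' \<and> std_homog 2 b' \<and> std_homog 2 d'
    \<and> \<Delta> = a' * b' + c' * d'"
proof -
  define T where "T = (\<lambda>a b c. Poly_Mapping.lookup \<Delta> (mono3 a b c))"
  have DT: "\<Delta> = tri 1 2 3 T" unfolding T_def by (rule Delta_rep[OF assms(1,2)])
  define \<alpha> where "\<alpha> = (\<lambda>v. Poly_Mapping.lookup a (ee v))"
  define \<gamma> where "\<gamma> = (\<lambda>v. Poly_Mapping.lookup c (ee v))"
  have V: "Fcol T x = 0" if "LL \<alpha> x = 0" "LL \<gamma> x = 0" for x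
  proof -
    have "ev \<Delta> x = ev a x * ev b x + ev c x * ev d x" using assms(11) by (simp add: ev_add ev_mult)
    moreover have "ev a x = LL \<alpha> x" unfolding \<alpha>_def by (rule ev_lin[OF assms(3,7)])
    moreover have "ev c x = LL \<gamma> x" unfolding \<gamma>_def by (rule ev_lin[OF assms(5,8)])
    moreover have "ev \<Delta> x = Fcol T x" by (subst DT) (rule ev_tri123)
    ultimately show ?thesis using that by simp
  qed
  have "GoalT T" by (rule mainV) (rule V)
  hence G: "\<exists>a' b' c' d'. in_S a' \<and> in_S b' \<and> in_S c' \<and> in_S d'
    \<and> col_homog a' \<and> col_homog b' \<and> col_homog c' \<and> col_homog d'
    \<and> std_homog 1 a' \<and> std_homog 1 c' \<and> std_homog 2 b' \<and> std_homog 2 d'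
    \<and> tri 1 2 3 T = a' * b' + c' * d'" by (simp only: GoalT_def)
  show ?thesis by (subst DT) (rule G)
qed

end
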